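(* In the setting of the context, at every iteration $n$ the search directions satisfy $\langle v_{n,j},J_{p^*}(v_{n,k})\rangle=0$ for all $1\le j<k\le N_n$.
   Context: $X$ is a real smooth, uniformly convex Banach space, $Y$ a real Banach space, $A:X\to Y$ bounded linear with adjoint $A^*$, $y\in\mathcal{R}(A)$. Fix $p,r\in(1,\infty)$, $p^*=p/(p-1)$. $J_p:X\to X^*$ is the duality mapping with gauge $t^{p-1}$, $J_{p^*}:X^*\to X$ the duality mapping of $X^*$ with gauge $t^{p^*-1}$ ($\langle J_{p^*}(v),v\rangle=\|v\|^{p^*}$, $\|J_{p^*}(v)\|=\|v\|^{p^*-1}$), $J_r^Y$ a single-valued selection of the duality mapping of $Y$ with gauge $t^{r-1}$. Method: choose $x_0$ with $J_p(x_0)\in\overline{\mathcal{R}(A^* )}$, fix $N\in\mathbb{N}$, $N_n=\min(N,n+1)$. For $n=0,1,\dots$: $w_n=Ax_n-y$; stop if $w_n=0$. Else $u_n=A^*J_r^Y(w_n)$. Let $s_n$ minimize $s\mapsto\|u_n-\sum_{i=1}^{N_{n-1}}s_iv_{n-1,i}\|^{p^*}_{X^*}$ (empty sum for $n=0$), set $v_{n,N_n}=u_n-\sum_k s_{n,k}v_{n-1,k}$; $v_{n,1},\dots,v_{n,N_n-1}$ are the last $N_n-1$ entries of the previous list $v_{n-1,1},\dots,v_{n-1,N_{n-1}}$, in order. With precursors $w^*_{n,k}$ ($v_{n,k}=A^*w^*_{n,k}$, built by the same linear combinations from $J_r^Y(w_n)$) and offsets $\beta_{n,k}=\langle w^*_{n,k},y\rangle$,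 $t_n$ minimizes $h_n(t)=\tfrac1{p^*}\|J_p(x_n)-\sum_k t_kv_{n,k}\|^{p^*}+\sum_k t_k\beta_{n,k}$ and $x_{n+1}=J_{p^*}(J_p(x_n)-\sum_k t_{n,k}v_{n,k})$. *)

theory Defs
  imports "HOL-Analysis.Analysis"
begin

definition unif_convex :: "'a::real_normed_vector itself \<Rightarrow> bool" where
  "unif_convex _ \<longleftrightarrow>
     (\<forall>\<epsilon>>0. \<exists>\<delta>>0. \<forall>x y::'a. norm x \<le> 1 \<longrightarrow> norm y \<le> 1 \<longrightarrow> norm (x - y) \<ge> \<epsilon>
        \<longrightarrow> norm ((x + y) /\<^sub>R 2) \<le> 1 - \<delta>)"

definition smooth_space :: "'a::real_normed_vector itself \<Rightarrow> bool" where
  "smooth_space _ \<longleftrightarrow>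
     (\<forall>x::'a. x \<noteq> 0 \<longrightarrow> (\<exists>g :: 'a \<Rightarrow>\<^sub>L real. \<forall>h.
        ((\<lambda>\<tau>. norm (x + \<tau> *\<^sub>R h)) has_real_derivative blinfun_apply g h) (at 0)))"

definition duality_map :: "real \<Rightarrow> ('a::real_normed_vector \<Rightarrow> ('a \<Rightarrow>\<^sub>L real)) \<Rightarrow> bool" where
  "duality_map q J \<longleftrightarrow>
     (\<forall>x. blinfun_apply (J x) x = norm x powr q \<and> norm (J x) = norm x powr (q - 1))"

text \<open>Duality mapping of the dual space X* with gauge t^(q-1), with values in X
  (identifying X** with X, X being reflexive).\<close>
definition dual_duality_map :: "real \<Rightarrow> (('a::real_normed_vector \<Rightarrow>\<^sub>L real) \<Rightarrow> 'a) \<Rightarrow> bool" where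
  "dual_duality_map q J \<longleftrightarrow>
     (\<forall>v. blinfun_apply v (J v) = norm v powr q \<and> norm (J v) = norm v powr (q - 1))"

definition adj :: "('a::real_normed_vector \<Rightarrow>\<^sub>L 'b::real_normed_vector) \<Rightarrow> ('b \<Rightarrow>\<^sub>L real) \<Rightarrow> ('a \<Rightarrow>\<^sub>L real)" where
  "adj A w = w o\<^sub>L A"

definition Nn :: "nat \<Rightarrow> nat \<Rightarrow> nat" where
  "Nn N n = min N (n + 1)"

end

theory Submission
  imports Defs
begin

lemma norming_exists:
  fixes f :: "'a::real_normed_vector \<Rightarrow>\<^sub>L real"
  assumes "b < norm f"
  shows "\<exists>z. norm z \<le> 1 \<and> blinfun_apply f z > b"
proof (rule ccontr)
  assume H: "\<not> ?thesis"
  have b0: "0 \<le> b"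
  proof (rule ccontr)
    assume "\<not> 0 \<le> b" then show False using H[simplified] by (metis blinfun.zero_right norm_zero zero_le_one not_le)
  qed
  have "norm f \<le> b"
  proof (rule norm_blinfun_bound[OF b0])
    fix x :: 'a
    show "norm (blinfun_apply f x) \<le> b * norm x"
    proof (cases "x = 0")
      case True then show ?thesis by (simp add: blinfun.zero_right)
    next
      case False
      hence nx: "norm x > 0" by simp
      have n1: "norm (x /\<^sub>R norm x) \<le> 1" "norm (- (x /\<^sub>R norm x)) \<le> 1" using nx by simp_all
      have "blinfun_apply f (x /\<^sub>R norm x) \<le> b" "blinfun_apply f (- (x /\<^sub>R norm x)) \<le> b"
        using H n1 by (auto simp: not_less)
      hence "f x / norm x \<le> b" "- (f x / norm x) \<le> b"
        by (simp_all add: blinfun.scaleR_right blinfun.minus_right divide_inverse mult.commute)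
      hence "\<bar>f x\<bar> / norm x \<le> b" by (simp add: abs_if split: if_splits)
      thus ?thesis using nx by (simp add: pos_divide_le_eq mult.commute)
    qed
  qed
  thus False using assms by simp
qed

lemma orth_half:
  fixes g h :: "'a::real_normed_vector \<Rightarrow>\<^sub>L real" and x :: 'a
  assumes uc: "unif_convex TYPE('a)" and xn: "norm x = 1" and gx: "blinfun_apply g x = norm g"
    and gpos: "norm g > 0" and mn: "\<forall>\<tau>. norm g \<le> norm (g - \<tau> *\<^sub>R h)"
  shows "blinfun_apply h x \<le> 0"
proof (rule ccontr)
  define a where "a = norm g"
  define c where "c = blinfun_apply h x"
  define nh where "nh = norm h"
  assume "\<not> blinfun_apply h x \<le> 0"
  hence c0: "c > 0" by (simp add: c_def)
  have "c \<le> nh" using norm_blinfun[of h x] xn by (simp add: c_def nh_def)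
  hence nh0: "nh > 0" using c0 by simp
  obtain \<delta> where d0: "\<delta> > 0" and dU: "\<And>x y::'a. norm x \<le> 1 \<Longrightarrow> norm y \<le> 1 \<Longrightarrow> norm (x - y) \<ge> c / (2*nh)
        \<Longrightarrow> norm ((x + y) /\<^sub>R 2) \<le> 1 - \<delta>"
    using uc[unfolded unif_convex_def, rule_format, of "c/(2*nh)"] c0 nh0 by auto
  define \<tau> where "\<tau> = min (c/2) (min 1 (2*\<delta>*a/(1+nh)))"
  have a0: "a > 0" using gpos a_def by simp
  have t0: "\<tau> > 0" using c0 d0 a0 nh0 by (simp add: \<tau>_def)
  have t1: "\<tau> \<le> c/2" "\<tau> \<le> 1" "\<tau> \<le> 2*\<delta>*a/(1+nh)" by (simp_all add: \<tau>_def)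
  have "a - \<tau>^2 < norm (g - \<tau> *\<^sub>R h)" using mn t0 a_def
    by (smt (verit) zero_less_power)
  then obtain z where zn: "norm z \<le> 1" and gz: "blinfun_apply (g - \<tau> *\<^sub>R h) z > a - \<tau>^2"
    using norming_exists by blast
  have gz2: "blinfun_apply g z - \<tau> * blinfun_apply h z > a - \<tau>^2"
    using gz by (simp add: blinfun.diff_left blinfun.scaleR_left)
  have gzle: "blinfun_apply g z \<le> a"
    using norm_blinfun[of g z] zn a0 a_def
    by (smt (verit, best) mult_left_le real_norm_def)
  have hzge: "blinfun_apply h z \<ge> - nh"
    using norm_blinfun[of h z] zn nh0 nh_def
    by (smt (verit, best) mult_left_le real_norm_def)
  have "\<tau> * blinfun_apply h z < \<tau> * \<tau>" using gz2 gzle by (simp add: power2_eq_square)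
  hence hz: "blinfun_apply h z < \<tau>" using t0 by simp
  have hxz: "blinfun_apply h (x - z) > c/2" using hz t1 by (simp add: blinfun.diff_right c_def)
  have "blinfun_apply h (x - z) \<le> nh * norm (x - z)"
    using norm_blinfun[of h "x - z"] nh_def by simp
  hence "c/2 < nh * norm (x - z)" using hxz by simp
  hence "norm (x - z) \<ge> c/(2*nh)" using nh0 by (simp add: field_simps)
  hence half: "norm ((x + z) /\<^sub>R 2) \<le> 1 - \<delta>" using dU[of x z] xn zn by simp
  have "norm (x + z) = 2 * norm ((x + z) /\<^sub>R 2)" by simp
  hence up: "norm (x + z) \<le> 2 - 2*\<delta>" using half by simp
  have "blinfun_apply g (x + z) > 2*a - \<tau>^2 - \<tau> * nh"
  proof -
    have "\<tau> * blinfun_apply h z \<ge> - \<tau> * nh" using mult_left_mono[OF hzge, of \<tau>] t0 by simp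
    thus ?thesis using gz2 gx a_def by (simp add: blinfun.add_right)
  qed
  moreover have "blinfun_apply g (x + z) \<le> a * norm (x + z)"
    using norm_blinfun[of g "x+z"] a_def by simp
  moreover have "\<tau>^2 + \<tau> * nh \<le> 2*\<delta>*a"
  proof -
    have "\<tau>^2 + \<tau> * nh \<le> \<tau> * (1 + nh)" using t0 t1 by (simp add: power2_eq_square algebra_simps)
    also have "\<dots> \<le> 2*\<delta>*a" using t1(3) nh0 by (simp add: pos_le_divide_eq mult.commute)
    finally show ?thesis .
  qed
  ultimately have "a * norm (x + z) > a * (2 - 2*\<delta>)" by (simp add: algebra_simps)
  hence "norm (x + z) > 2 - 2*\<delta>" using a0 by simp
  thus False using up by simp
qed

lemma orth_dual:
  fixes g h :: "'a::real_normed_vector \<Rightarrow>\<^sub>L real" and Jps :: "('a \<Rightarrow>\<^sub>L real) \<Rightarrow> 'a"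
  assumes uc: "unif_convex TYPE('a)" and J: "dual_duality_map q Jps" and q: "q > 1"
    and mn: "\<forall>\<tau>. norm g \<le> norm (g - \<tau> *\<^sub>R h)"
  shows "blinfun_apply h (Jps g) = 0"
proof (cases "g = 0")
  case True
  have "norm (Jps g) = 0" using J True by (simp add: dual_duality_map_def)
  thus ?thesis by (simp add: blinfun.zero_right)
next
  case False
  define a where "a = norm g"
  have a0: "a > 0" using False a_def by simp
  have J1: "blinfun_apply g (Jps g) = a powr q" "norm (Jps g) = a powr (q - 1)"
    using J a_def by (auto simp: dual_duality_map_def)
  define x where "x = Jps g /\<^sub>R (a powr (q - 1))"
  have pp: "a powr (q - 1) > 0" using a0 by simp
  have xn: "norm x = 1" using J1 pp by (simp add: x_def)
  have "a powr q = a powr (q - 1) * a" using a0 by (simp add: powr_diff)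
  hence gx: "blinfun_apply g x = norm g" using J1 pp by (simp add: x_def blinfun.scaleR_right a_def)
  have mn2: "\<forall>\<tau>. norm g \<le> norm (g - \<tau> *\<^sub>R (- h))"
    using mn by (metis scaleR_minus_left scaleR_minus_right)
  have "blinfun_apply h x \<le> 0" using orth_half[OF uc xn gx] False mn by simp
  moreover have "blinfun_apply (- h) x \<le> 0" using orth_half[OF uc xn gx] False mn2 by simp
  ultimately have "blinfun_apply h x = 0" by (simp add: blinfun.minus_left)
  hence "blinfun_apply h (Jps g) / a powr (q - 1) = 0"
    by (simp add: x_def blinfun.scaleR_right divide_inverse mult.commute)
  thus ?thesis using pp by simp
qed

theorem mainTheorem3:
  fixes A :: "'a::banach \<Rightarrow>\<^sub>L 'b::banach" and y :: 'b and p r :: real and N :: nat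
    and Jp :: "'a \<Rightarrow> ('a \<Rightarrow>\<^sub>L real)" and Jps :: "('a \<Rightarrow>\<^sub>L real) \<Rightarrow> 'a"
    and Jr :: "'b \<Rightarrow> ('b \<Rightarrow>\<^sub>L real)"
    and x :: "nat \<Rightarrow> 'a" and s t :: "nat \<Rightarrow> nat \<Rightarrow> real"
    and v :: "nat \<Rightarrow> nat \<Rightarrow> ('a \<Rightarrow>\<^sub>L real)" and ws :: "nat \<Rightarrow> nat \<Rightarrow> ('b \<Rightarrow>\<^sub>L real)"
  assumes X: "smooth_space TYPE('a)" "unif_convex TYPE('a)"
    and pr: "p > 1" "r > 1" and N: "N \<ge> 1"
    and y: "y \<in> range (blinfun_apply A)"
    and Jp: "duality_map p Jp"
    and Jps: "dual_duality_map (p / (p - 1)) Jps"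
    and Jr: "duality_map r Jr"
    and x0: "Jp (x 0) \<in> closure (range (adj A))"
    and init: "blinfun_apply A (x 0) \<noteq> y \<Longrightarrow>
        v 0 1 = adj A (Jr (blinfun_apply A (x 0) - y)) \<and> ws 0 1 = Jr (blinfun_apply A (x 0) - y)"
    and s_min: "\<And>n \<sigma>. n \<ge> 1 \<Longrightarrow> (\<forall>m\<le>n. blinfun_apply A (x m) \<noteq> y) \<Longrightarrow>
        norm (adj A (Jr (blinfun_apply A (x n) - y))
              - (\<Sum>k=1..Nn N (n - 1). s n k *\<^sub>R v (n - 1) k)) powr (p / (p - 1))
        \<le> norm (adj A (Jr (blinfun_apply A (x n) - y))
              - (\<Sum>k=1..Nn N (n - 1). \<sigma> k *\<^sub>R v (n - 1) k)) powr (p / (p - 1))"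
    and v_new: "\<And>n. n \<ge> 1 \<Longrightarrow> (\<forall>m\<le>n. blinfun_apply A (x m) \<noteq> y) \<Longrightarrow>
        v n (Nn N n) = adj A (Jr (blinfun_apply A (x n) - y))
              - (\<Sum>k=1..Nn N (n - 1). s n k *\<^sub>R v (n - 1) k)
      \<and> ws n (Nn N n) = Jr (blinfun_apply A (x n) - y)
              - (\<Sum>k=1..Nn N (n - 1). s n k *\<^sub>R ws (n - 1) k)"
    and v_old: "\<And>n j. n \<ge> 1 \<Longrightarrow> (\<forall>m\<le>n. blinfun_apply A (x m) \<noteq> y) \<Longrightarrow>
        1 \<le> j \<Longrightarrow> j < Nn N n \<Longrightarrow>
        v n j = v (n - 1) (Nn N (n - 1) + 1 + j - Nn N n)
      \<and> ws n j = ws (n - 1) (Nn N (n - 1) + 1 + j - Nn N n)"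
    and t_min: "\<And>n \<tau>. (\<forall>m\<le>n. blinfun_apply A (x m) \<noteq> y) \<Longrightarrow>
        1 / (p / (p - 1)) * norm (Jp (x n) - (\<Sum>k=1..Nn N n. t n k *\<^sub>R v n k)) powr (p / (p - 1))
          + (\<Sum>k=1..Nn N n. t n k * blinfun_apply (ws n k) y)
        \<le> 1 / (p / (p - 1)) * norm (Jp (x n) - (\<Sum>k=1..Nn N n. \<tau> k *\<^sub>R v n k)) powr (p / (p - 1))
          + (\<Sum>k=1..Nn N n. \<tau> k * blinfun_apply (ws n k) y)"
    and x_next: "\<And>n. (\<forall>m\<le>n. blinfun_apply A (x m) \<noteq> y) \<Longrightarrow>
        x (Suc n) = Jps (Jp (x n) - (\<Sum>k=1..Nn N n. t n k *\<^sub>R v n k))"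
  shows "\<forall>n. (\<forall>m\<le>n. blinfun_apply A (x m) \<noteq> y) \<longrightarrow>
     (\<forall>j k. 1 \<le> j \<longrightarrow> j < k \<longrightarrow> k \<le> Nn N n \<longrightarrow> blinfun_apply (v n j) (Jps (v n k)) = 0)"
proof -
  define q where "q = p / (p - 1)"
  have q1: "q > 1" using pr by (simp add: q_def)
  have q0: "q > 0" using q1 by simp
  have N0: "Nn N 0 = 1" using N by (simp add: Nn_def)
  have Nsuc: "Nn N (Suc n) \<le> Nn N n + 1" "Nn N n \<le> Nn N (Suc n)" for n by (auto simp: Nn_def)
  show ?thesis
  proof (intro allI)
    fix n show "(\<forall>m\<le>n. blinfun_apply A (x m) \<noteq> y) \<longrightarrow>
     (\<forall>j k. 1 \<le> j \<longrightarrow> j < k \<longrightarrow> k \<le> Nn N n \<longrightarrow> blinfun_apply (v n j) (Jps (v n k)) = 0)"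
    proof (induction n)
      case 0 show ?case using N0 by auto
    next
      case (Suc n)
      show ?case
      proof (intro impI allI)
        fix j k assume ok: "\<forall>m\<le>Suc n. blinfun_apply A (x m) \<noteq> y" and jk: "1 \<le> j" "j < k" "k \<le> Nn N (Suc n)"
        have okn: "\<forall>m\<le>n. blinfun_apply A (x m) \<noteq> y" using ok by auto
        define ij where "ij = Nn N n + 1 + j - Nn N (Suc n)"
        have vj: "v (Suc n) j = v n ij" using v_old[of "Suc n" j] ok jk by (simp add: ij_def)
        have ij: "1 \<le> ij" "ij \<le> Nn N n" using jk Nsuc[of n] by (auto simp: ij_def)
        show "blinfun_apply (v (Suc n) j) (Jps (v (Suc n) k)) = 0"
        proof (cases "k < Nn N (Suc n)")
          case True
          define ik where "ik = Nn N n + 1 + k - Nn N (Suc n)"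
          have vk: "v (Suc n) k = v n ik" using v_old[of "Suc n" k] ok jk True by (simp add: ik_def)
          have ik: "ij < ik" "ik \<le> Nn N n" using jk Nsuc[of n] True by (auto simp: ij_def ik_def)
          show ?thesis using Suc.IH okn ij ik vj vk by auto
        next
          case False
          hence kN: "k = Nn N (Suc n)" using jk by simp
          define u where "u = adj A (Jr (blinfun_apply A (x (Suc n)) - y))"
          define S where "S = (\<Sum>i=1..Nn N n. s (Suc n) i *\<^sub>R v n i)"
          have vk: "v (Suc n) k = u - S" using v_new[of "Suc n"] ok kN by (simp add: u_def S_def)
          have mn: "\<forall>\<tau>. norm (u - S) \<le> norm (u - S - \<tau> *\<^sub>R v n ij)"
          proof
            fix \<tau> :: real
            define \<sigma> where "\<sigma> = (\<lambda>i. s (Suc n) i + (if i = ij then \<tau> else 0))"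
            have sumeq: "(\<Sum>i=1..Nn N n. \<sigma> i *\<^sub>R v n i) = S + \<tau> *\<^sub>R v n ij"
            proof -
              have "(\<Sum>i=1..Nn N n. \<sigma> i *\<^sub>R v n i) = S + (\<Sum>i=1..Nn N n. (if i = ij then \<tau> *\<^sub>R v n i else 0))"
            proof -
              have "\<And>i. \<sigma> i *\<^sub>R v n i = s (Suc n) i *\<^sub>R v n i + (if i = ij then \<tau> *\<^sub>R v n i else 0)"
                by (simp add: \<sigma>_def scaleR_add_left)
              thus ?thesis by (simp add: S_def sum.distrib)
            qed
              also have "\<dots> = S + \<tau> *\<^sub>R v n ij" using ij by (simp add: sum.delta)
              finally show ?thesis .
            qed
            have "norm (u - S) powr q \<le> norm (u - S - \<tau> *\<^sub>R v n ij) powr q"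
              using s_min[of "Suc n" \<sigma>] ok sumeq by (simp add: u_def S_def q_def diff_diff_eq)
            thus "norm (u - S) \<le> norm (u - S - \<tau> *\<^sub>R v n ij)"
              using powr_less_mono2[OF q0] by (meson norm_ge_zero not_le)
          qed
          show ?thesis using orth_dual[OF X(2) Jps[folded q_def] q1 mn] vj vk by simp
        qed
      qed
    qed
  qed
qed

end
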